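(* Let $n$ be a positive integer, and let $a\in\mathcal{T}_n$ with $\operatorname{rank}(a)=r$. Then the variant $\mathcal{T}_n^a$ embeds in $\mathcal{T}_{2n-r}$ (i.e., there is an injective semigroup homomorphism $\mathcal{T}_n^a\to\mathcal{T}_{2n-r}$).
   Context: For a positive integer $m$, $\mathcal{T}_m$ is the semigroup of all functions $\{1,\ldots,m\}\to\{1,\ldots,m\}$ under composition; $\operatorname{rank}(f)=|\operatorname{im}(f)|$. For a semigroup $S$ and $a\in S$, the variant $S^a$ is the set $S$ with operation $x\star_a y=xay$. *)

theory Defs
  imports "HOL-Library.FuncSet"
begin

definition T :: "nat \<Rightarrow> (nat \<Rightarrow> nat) set" where
  "T m = ({1..m} \<rightarrow>\<^sub>E {1..m})"

text \<open>Product in T_m: composition (x*y means apply x first, then y; the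
  semigroup is anti-isomorphic under the other convention, and the statement
  is insensitive to the choice as long as it is used uniformly).\<close>
definition tmult :: "nat \<Rightarrow> (nat \<Rightarrow> nat) \<Rightarrow> (nat \<Rightarrow> nat) \<Rightarrow> (nat \<Rightarrow> nat)" where
  "tmult m x y = compose {1..m} y x"

definition trank :: "nat \<Rightarrow> (nat \<Rightarrow> nat) \<Rightarrow> nat" where
  "trank m f = card (f ` {1..m})"

definition vmult :: "nat \<Rightarrow> (nat \<Rightarrow> nat) \<Rightarrow> (nat \<Rightarrow> nat) \<Rightarrow> (nat \<Rightarrow> nat) \<Rightarrow> (nat \<Rightarrow> nat)" where
  "vmult m a x y = tmult m (tmult m x a) y"

end

theory Submission
  imports Defs
begin

theorem corollary4p1:
  fixes n r :: nat and a :: "nat \<Rightarrow> nat"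
  assumes "n \<ge> 1" and "a \<in> T n" and "trank n a = r"
  shows "\<exists>\<phi>. \<phi> \<in> T n \<rightarrow> T (2 * n - r) \<and> inj_on \<phi> (T n) \<and>
           (\<forall>x\<in>T n. \<forall>y\<in>T n. \<phi> (vmult n a x y) = tmult (2 * n - r) (\<phi> x) (\<phi> y))"
proof -
  define A where "A = a ` {1..n}"
  have aT: "\<And>i. i \<in> {1..n} \<Longrightarrow> a i \<in> {1..n}" using assms(2) unfolding T_def by auto
  have Asub: "A \<subseteq> {1..n}" using aT A_def by auto
  have rA: "card A = r" using assms(3) A_def trank_def by simp
  have rle: "r \<le> n" using rA Asub by (metis card_atLeastAtMost card_mono diff_Suc_1 finite_atLeastAtMost)
  have c1: "card {n+1..2*n-r} = n - r" using rle by simp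
  have c2: "card ({1..n} - A) = n - r" using Asub rA by (simp add: card_Diff_subset finite_subset)
  obtain e where e: "bij_betw e {n+1..2*n-r} ({1..n} - A)"
    using finite_same_card_bij[of "{n+1..2*n-r}" "{1..n} - A"] c1 c2 by auto
  define g where "g = (\<lambda>w. if w \<le> n then a w else e w)"
  define \<Omega> where "\<Omega> = {1..2*n-r}"
  have gin: "\<And>w. w \<in> \<Omega> \<Longrightarrow> g w \<in> {1..n}"
  proof -
    fix w assume w: "w \<in> \<Omega>"
    show "g w \<in> {1..n}"
    proof (cases "w \<le> n")
      case True then show ?thesis using w aT unfolding g_def \<Omega>_def by auto
    next
      case False then have "w \<in> {n+1..2*n-r}" using w \<Omega>_def by auto
      then show ?thesis using e False unfolding g_def bij_betw_def by auto
    qed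
  qed
  have gsurj: "\<And>j. j \<in> {1..n} \<Longrightarrow> \<exists>w\<in>\<Omega>. g w = j"
  proof -
    fix j assume j: "j \<in> {1..n}"
    show "\<exists>w\<in>\<Omega>. g w = j"
    proof (cases "j \<in> A")
      case True then obtain i where "i \<in> {1..n}" "a i = j" using A_def by auto
      then show ?thesis using rle unfolding g_def \<Omega>_def by (intro bexI[of _ i]) auto
    next
      case False then have "j \<in> e ` {n+1..2*n-r}" using e j unfolding bij_betw_def by auto
      then obtain w where "w \<in> {n+1..2*n-r}" "e w = j" by auto
      then show ?thesis unfolding g_def \<Omega>_def by (intro bexI[of _ w]) auto
    qed
  qed
  define \<phi> :: "(nat \<Rightarrow> nat) \<Rightarrow> nat \<Rightarrow> nat" where "\<phi> = (\<lambda>x. restrict (\<lambda>w. x (g w)) \<Omega>)"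
  have xT: "\<And>x i. x \<in> T n \<Longrightarrow> i \<in> {1..n} \<Longrightarrow> x i \<in> {1..n}" unfolding T_def by auto
  have P1: "\<phi> \<in> T n \<rightarrow> T (2 * n - r)"
  proof
    fix x assume x: "x \<in> T n"
    show "\<phi> x \<in> T (2 * n - r)" unfolding T_def
    proof (rule PiE_I)
      fix w assume w: "w \<in> {1..2 * n - r}"
      then have "w \<in> \<Omega>" using \<Omega>_def by simp
      then have "x (g w) \<in> {1..n}" using gin xT x by blast
      then show "\<phi> x w \<in> {1..2 * n - r}" using w rle unfolding \<phi>_def \<Omega>_def by auto
    next
      fix w assume "w \<notin> {1..2 * n - r}"
      then show "\<phi> x w = undefined" unfolding \<phi>_def \<Omega>_def by auto
    qed
  qed
  have P2: "inj_on \<phi> (T n)"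
  proof (rule inj_onI)
    fix x y assume x: "x \<in> T n" and y: "y \<in> T n" and eq: "\<phi> x = \<phi> y"
    show "x = y"
    proof (rule extensionalityI[of _ "{1..n}"])
      show "x \<in> extensional {1..n}" "y \<in> extensional {1..n}" using x y unfolding T_def by (auto simp: PiE_def)
      fix j assume "j \<in> {1..n}"
      then obtain w where w: "w \<in> \<Omega>" "g w = j" using gsurj by blast
      have "\<phi> x w = \<phi> y w" using eq by simp
      then show "x j = y j" using w unfolding \<phi>_def by simp
    qed
  qed
  have P3: "\<forall>x\<in>T n. \<forall>y\<in>T n. \<phi> (vmult n a x y) = tmult (2 * n - r) (\<phi> x) (\<phi> y)"
  proof (intro ballI)
    fix x y assume x: "x \<in> T n" and y: "y \<in> T n"
    show "\<phi> (vmult n a x y) = tmult (2 * n - r) (\<phi> x) (\<phi> y)"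
    proof (rule ext)
      fix w
      show "\<phi> (vmult n a x y) w = tmult (2 * n - r) (\<phi> x) (\<phi> y) w"
      proof (cases "w \<in> \<Omega>")
        case True
        have gw: "g w \<in> {1..n}" using gin True .
        have xg: "x (g w) \<in> {1..n}" using xT x gw by blast
        have xgO: "x (g w) \<in> \<Omega>" using xg \<Omega>_def rle by auto
        have "g (x (g w)) = a (x (g w))" using xg g_def by auto
        then show ?thesis using True gw xg xgO
          unfolding \<phi>_def vmult_def tmult_def compose_def \<Omega>_def by simp
      next
        case False then show ?thesis unfolding \<phi>_def tmult_def compose_def \<Omega>_def by auto
      qed
    qed
  qed
  show ?thesis using P1 P2 P3 by blast
qed

end
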